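(* Assume $\{\beta\in\mathbb{R}^p: A\beta\le b,\ \Gamma\beta=d\}\neq\emptyset$. Run the generalized SMO algorithm with $\tau=0$ from some $\theta^0\in\mathcal F$ and suppose it never stops ($\Delta^k>0$ for all $k$). Let $K\subseteq\mathbb{N}$ be an infinite set of iterations at which the update is not clipped. Then $\Delta^k\to0$ as $k\to\infty$ with $k\in K$; in particular each of $\Delta_1,\Delta_2,\Delta_3,\Delta_4$ computed at $\theta^k$ tends to $0$ along $K$.
   Context: Setup. Let $n,p,k_1,k_2\ge1$, $X\in\mathbb{R}^{n\times p}$ with rows $X_{i:}$, $y\in\mathbb{R}^n$, $C>0$, $\nu\in(0,1]$, $A\in\mathbb{R}^{k_1\times p}$, $b\in\mathbb{R}^{k_1}$, $\Gamma\in\mathbb{R}^{k_2\times p}$, $d\in\mathbb{R}^{k_2}$; $\mathbf e$ is the all-ones vector and $Q=XX^T\in\mathbb{R}^{n\times n}$. Dual variables are $\theta=(\alpha,\alpha^*,\gamma,\mu)\in\mathbb{R}^n\times\mathbb{R}^n\times\mathbb{R}^{k_1}\times\mathbb{R}^{k_2}$. Let $M$ be the $(2n+k_1+k_2)\times p$ matrix with row blocks $X,-X,A,-\Gamma$, $\bar Q=MM^T$, $l=(y,-y,b,-d)$, and $f(\theta)=\frac12\theta^T\bar Q\theta+l^T\theta$. The feasible set $\mathcal F$ consists of $\theta$ with $0\le\alpha_i,\alpha_i^*\le C/n$ for all $i$, $\mathbf e^T(\alpha+\alpha^* )\le C\nu$, $\mathbf e^T(\alpha-\alpha^* )=0$,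 $\gamma_j\ge0$ for all $j$. Generalized SMO algorithm. Assume the rows of $X$ are pairwise distinct and no row of $A$ or $\Gamma$ is zero. Let $I_{up}(\alpha)=\{i:\alpha_i<C/n\}$, $I_{low}(\alpha)=\{i:\alpha_i>0\}$, and $I^*_{up},I^*_{low}$ the same sets for $\alpha^*$. Fix $\tau\ge0$ and $\theta^0\in\mathcal F$. At iteration $k$, with all gradients evaluated at $\theta^k$: pick $i\in\arg\min_{I_{up}(\alpha^k)}\nabla_{\alpha_i}f$, $j\in\arg\max_{I_{low}(\alpha^k)}\nabla_{\alpha_j}f$ and set $\Delta_1=\max(\nabla_{\alpha_j}f-\nabla_{\alpha_i}f,0)$ ($\Delta_1=0$ if either set is empty); define $i^*,j^*,\Delta_2$ identically for $\alpha^*$; $\Delta_3=\max(-\min_{s}\nabla_{\gamma_s}f,0)$; $\Delta_4=\max_s|\nabla_{\mu_s}f|$; $\Delta^k=\max(\Delta_1,\Delta_2,\Delta_3,\Delta_4)$. If $\Delta^k\le\tau$ stop; otherwise update the first block (in the order $\alpha,\alpha^*,\gamma,\mu$) whose $\Delta_m$ equals $\Delta^k$, leaving all other coordinates unchanged: Block $\alpha$: $t_q=-\frac{\nabla_{\alpha_i}f-\nabla_{\alpha_j}f}{Q_{ii}+Q_{jj}-2Q_{ij}}$, $I_1=\max(-\alpha_i^k,\alpha_j^k-C/n)$, $I_2=\min(\alpha_j^k,C/n-\alpha_i^k)$, $t^*=\min(\max(I_1,t_q),I_2)$, $\alpha_i^{k+1}=\alpha_i^k+t^*$, $\alpha_j^{k+1}=\alpha_j^k-t^*$.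 Block $\alpha^*$: the same formulas with $\alpha^*$, $(i^*,j^* )$, $\nabla_{\alpha^*}f$ and the same matrix $Q$. Block $\gamma$: $u\in\arg\min_s\nabla_{\gamma_s}f$, $\gamma_u^{k+1}=\max\big(\gamma_u^k-\nabla_{\gamma_u}f/(AA^T)_{uu},0\big)$. Block $\mu$: $u\in\arg\max_s|\nabla_{\mu_s}f|$, $\mu_u^{k+1}=\mu_u^k-\nabla_{\mu_u}f/(\Gamma\Gamma^T)_{uu}$. Clipping. An update in block $\alpha$ or $\alpha^*$ is called clipped if $t^*\neq t_q$; an update in block $\gamma$ is clipped if $\gamma_u^k-\nabla_{\gamma_u}f(\theta^k)/(AA^T)_{uu}<0$; updates in block $\mu$ are never clipped. *)

theory Defs
  imports Complex_Main
begin

text \<open>Problem data. Vectors are functions nat => real, only indices below the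
stated dimension matter; matrices are nat => nat => real (row, column).\<close>

record svr_data =
  nn  :: nat
  pp  :: nat
  kk1 :: nat
  kk2 :: nat
  Xm  :: "nat \<Rightarrow> nat \<Rightarrow> real"
  yv  :: "nat \<Rightarrow> real"
  Cc  :: real
  nuu :: real
  Am  :: "nat \<Rightarrow> nat \<Rightarrow> real"
  bv  :: "nat \<Rightarrow> real"
  Gm  :: "nat \<Rightarrow> nat \<Rightarrow> real"
  dv  :: "nat \<Rightarrow> real"

text \<open>The dual vector theta is a single vector of length N = 2n+k1+k2 with
blocks alpha = [0,n), alpha* = [n,2n), gamma = [2n,2n+k1), mu = [2n+k1,N).\<close>

definition dimN :: "svr_data \<Rightarrow> nat" where
  "dimN P = 2 * nn P + kk1 P + kk2 P"

definition Mrow :: "svr_data \<Rightarrow> nat \<Rightarrow> nat \<Rightarrow> real" where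
  "Mrow P r t =
    (if r < nn P then Xm P r t
     else if r < 2 * nn P then - Xm P (r - nn P) t
     else if r < 2 * nn P + kk1 P then Am P (r - 2 * nn P) t
     else - Gm P (r - 2 * nn P - kk1 P) t)"

definition Qbar :: "svr_data \<Rightarrow> nat \<Rightarrow> nat \<Rightarrow> real" where
  "Qbar P r s = (\<Sum>t<pp P. Mrow P r t * Mrow P s t)"

definition lvec :: "svr_data \<Rightarrow> nat \<Rightarrow> real" where
  "lvec P r =
    (if r < nn P then yv P r
     else if r < 2 * nn P then - yv P (r - nn P)
     else if r < 2 * nn P + kk1 P then bv P (r - 2 * nn P)
     else - dv P (r - 2 * nn P - kk1 P))"

definition fobj :: "svr_data \<Rightarrow> (nat \<Rightarrow> real) \<Rightarrow> real" where
  "fobj P th = (1/2) * (\<Sum>r<dimN P. \<Sum>s<dimN P. th r * Qbar P r s * th s)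
               + (\<Sum>r<dimN P. lvec P r * th r)"

definition grad :: "svr_data \<Rightarrow> (nat \<Rightarrow> real) \<Rightarrow> nat \<Rightarrow> real" where
  "grad P th r = (\<Sum>s<dimN P. Qbar P r s * th s) + lvec P r"

definition alphaB :: "svr_data \<Rightarrow> (nat \<Rightarrow> real) \<Rightarrow> nat \<Rightarrow> real" where
  "alphaB P th i = th i"
definition alphasB :: "svr_data \<Rightarrow> (nat \<Rightarrow> real) \<Rightarrow> nat \<Rightarrow> real" where
  "alphasB P th i = th (nn P + i)"
definition gammaB :: "svr_data \<Rightarrow> (nat \<Rightarrow> real) \<Rightarrow> nat \<Rightarrow> real" where
  "gammaB P th j = th (2 * nn P + j)"
definition muB :: "svr_data \<Rightarrow> (nat \<Rightarrow> real) \<Rightarrow> nat \<Rightarrow> real" where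
  "muB P th j = th (2 * nn P + kk1 P + j)"

definition gA :: "svr_data \<Rightarrow> (nat \<Rightarrow> real) \<Rightarrow> nat \<Rightarrow> real" where
  "gA P th i = grad P th i"
definition gAs :: "svr_data \<Rightarrow> (nat \<Rightarrow> real) \<Rightarrow> nat \<Rightarrow> real" where
  "gAs P th i = grad P th (nn P + i)"
definition gG :: "svr_data \<Rightarrow> (nat \<Rightarrow> real) \<Rightarrow> nat \<Rightarrow> real" where
  "gG P th j = grad P th (2 * nn P + j)"
definition gM :: "svr_data \<Rightarrow> (nat \<Rightarrow> real) \<Rightarrow> nat \<Rightarrow> real" where
  "gM P th j = grad P th (2 * nn P + kk1 P + j)"

definition Qm :: "svr_data \<Rightarrow> nat \<Rightarrow> nat \<Rightarrow> real" where
  "Qm P i j = (\<Sum>t<pp P. Xm P i t * Xm P j t)"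
definition AAt :: "svr_data \<Rightarrow> nat \<Rightarrow> nat \<Rightarrow> real" where
  "AAt P i j = (\<Sum>t<pp P. Am P i t * Am P j t)"
definition GGt :: "svr_data \<Rightarrow> nat \<Rightarrow> nat \<Rightarrow> real" where
  "GGt P i j = (\<Sum>t<pp P. Gm P i t * Gm P j t)"

definition feasible :: "svr_data \<Rightarrow> (nat \<Rightarrow> real) \<Rightarrow> bool" where
  "feasible P th \<longleftrightarrow>
     (\<forall>i<nn P. 0 \<le> alphaB P th i \<and> alphaB P th i \<le> Cc P / real (nn P)
             \<and> 0 \<le> alphasB P th i \<and> alphasB P th i \<le> Cc P / real (nn P))
     \<and> (\<Sum>i<nn P. alphaB P th i + alphasB P th i) \<le> Cc P * nuu P
     \<and> (\<Sum>i<nn P. alphaB P th i - alphasB P th i) = 0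
     \<and> (\<forall>j<kk1 P. 0 \<le> gammaB P th j)"

definition Iup :: "svr_data \<Rightarrow> (nat \<Rightarrow> real) \<Rightarrow> nat set" where
  "Iup P a = {i. i < nn P \<and> a i < Cc P / real (nn P)}"
definition Ilow :: "svr_data \<Rightarrow> (nat \<Rightarrow> real) \<Rightarrow> nat set" where
  "Ilow P a = {i. i < nn P \<and> 0 < a i}"

definition delta_pair :: "svr_data \<Rightarrow> (nat \<Rightarrow> real) \<Rightarrow> (nat \<Rightarrow> real) \<Rightarrow> real" where
  "delta_pair P a g =
     (if Iup P a = {} \<or> Ilow P a = {} then 0
      else max (Max (g ` Ilow P a) - Min (g ` Iup P a)) 0)"

definition Delta1 :: "svr_data \<Rightarrow> (nat \<Rightarrow> real) \<Rightarrow> real" where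
  "Delta1 P th = delta_pair P (alphaB P th) (gA P th)"
definition Delta2 :: "svr_data \<Rightarrow> (nat \<Rightarrow> real) \<Rightarrow> real" where
  "Delta2 P th = delta_pair P (alphasB P th) (gAs P th)"
definition Delta3 :: "svr_data \<Rightarrow> (nat \<Rightarrow> real) \<Rightarrow> real" where
  "Delta3 P th = max (- Min (gG P th ` {..<kk1 P})) 0"
definition Delta4 :: "svr_data \<Rightarrow> (nat \<Rightarrow> real) \<Rightarrow> real" where
  "Delta4 P th = Max ((\<lambda>s. \<bar>gM P th s\<bar>) ` {..<kk2 P})"
definition Delta :: "svr_data \<Rightarrow> (nat \<Rightarrow> real) \<Rightarrow> real" where
  "Delta P th = max (max (Delta1 P th) (Delta2 P th)) (max (Delta3 P th) (Delta4 P th))"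

definition pair_tq :: "svr_data \<Rightarrow> (nat \<Rightarrow> real) \<Rightarrow> nat \<Rightarrow> nat \<Rightarrow> real" where
  "pair_tq P g i j = - (g i - g j) / (Qm P i i + Qm P j j - 2 * Qm P i j)"

definition pair_tstar :: "svr_data \<Rightarrow> (nat \<Rightarrow> real) \<Rightarrow> (nat \<Rightarrow> real) \<Rightarrow> nat \<Rightarrow> nat \<Rightarrow> real" where
  "pair_tstar P a g i j =
     (let I1 = max (- a i) (a j - Cc P / real (nn P));
          I2 = min (a j) (Cc P / real (nn P) - a i)
      in min (max I1 (pair_tq P g i j)) I2)"

definition pair_choice :: "svr_data \<Rightarrow> (nat \<Rightarrow> real) \<Rightarrow> (nat \<Rightarrow> real) \<Rightarrow> nat \<Rightarrow> nat \<Rightarrow> bool" where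
  "pair_choice P a g i j \<longleftrightarrow>
     i \<in> Iup P a \<and> g i = Min (g ` Iup P a) \<and>
     j \<in> Ilow P a \<and> g j = Max (g ` Ilow P a)"

text \<open>One iteration of the generalized SMO algorithm (the stopping test is
handled separately): smo_step P th th' clipped holds iff th' is a possible
next iterate from th (for some admissible argmin/argmax choice) and clipped
says whether that update was clipped.\<close>

definition smo_step :: "svr_data \<Rightarrow> (nat \<Rightarrow> real) \<Rightarrow> (nat \<Rightarrow> real) \<Rightarrow> bool \<Rightarrow> bool" where
  "smo_step P th th' clipped \<longleftrightarrow>
    (let D = Delta P th; n = nn P; k1 = kk1 P in
     (Delta1 P th = D \<and>
        (\<exists>i j. pair_choice P (alphaB P th) (gA P th) i j \<and>
          (let ts = pair_tstar P (alphaB P th) (gA P th) i j in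
             th' = th(i := th i + ts, j := th j - ts) \<and>
             clipped = (ts \<noteq> pair_tq P (gA P th) i j))))
   \<or> (Delta1 P th \<noteq> D \<and> Delta2 P th = D \<and>
        (\<exists>i j. pair_choice P (alphasB P th) (gAs P th) i j \<and>
          (let ts = pair_tstar P (alphasB P th) (gAs P th) i j in
             th' = th(n + i := th (n + i) + ts, n + j := th (n + j) - ts) \<and>
             clipped = (ts \<noteq> pair_tq P (gAs P th) i j))))
   \<or> (Delta1 P th \<noteq> D \<and> Delta2 P th \<noteq> D \<and> Delta3 P th = D \<and>
        (\<exists>u<k1. gG P th u = Min (gG P th ` {..<k1}) \<and>
          (let v = gammaB P th u - gG P th u / AAt P u u in
             th' = th(2 * n + u := max v 0) \<and> clipped = (v < 0))))
   \<or> (Delta1 P th \<noteq> D \<and> Delta2 P th \<noteq> D \<and> Delta3 P th \<noteq> D \<and> Delta4 P th = D \<and>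
        (\<exists>u<kk2 P. \<bar>gM P th u\<bar> = Max ((\<lambda>s. \<bar>gM P th s\<bar>) ` {..<kk2 P}) \<and>
             th' = th(2 * n + k1 + u := muB P th u - gM P th u / GGt P u u) \<and>
             clipped = False)))"

definition valid_data :: "svr_data \<Rightarrow> bool" where
  "valid_data P \<longleftrightarrow>
     1 \<le> nn P \<and> 1 \<le> pp P \<and> 1 \<le> kk1 P \<and> 1 \<le> kk2 P \<and>
     0 < Cc P \<and> 0 < nuu P \<and> nuu P \<le> 1 \<and>
     (\<forall>i<nn P. \<forall>j<nn P. i \<noteq> j \<longrightarrow> (\<exists>t<pp P. Xm P i t \<noteq> Xm P j t)) \<and>
     (\<forall>j<kk1 P. \<exists>t<pp P. Am P j t \<noteq> 0) \<and>
     (\<forall>j<kk2 P. \<exists>t<pp P. Gm P j t \<noteq> 0)"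

definition primal_feasible :: "svr_data \<Rightarrow> bool" where
  "primal_feasible P \<longleftrightarrow>
     (\<exists>\<beta>::nat \<Rightarrow> real.
        (\<forall>j<kk1 P. (\<Sum>t<pp P. Am P j t * \<beta> t) \<le> bv P j) \<and>
        (\<forall>j<kk2 P. (\<Sum>t<pp P. Gm P j t * \<beta> t) = dv P j))"

end

theory Submission imports Defs begin

lemma Qbar_sym: "Qbar P r s = Qbar P s r"
  unfolding Qbar_def by (simp add: mult.commute)

lemma fobj_update:
  "fobj P (\<lambda>r. th r + t * e r) = fobj P th + t * (\<Sum>r<dimN P. grad P th r * e r)
     + t^2/2 * (\<Sum>r<dimN P. \<Sum>s<dimN P. e r * Qbar P r s * e s)"
proof -
  define N where "N = dimN P"
  define Q where "Q = Qbar P"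
  have h1: "\<And>r s. (th r + t*e r) * Q r s * (th s + t * e s) = th r * Q r s * th s + t * (e r * Q r s * th s) + t * (th r * Q r s * e s) + t^2 * (e r * Q r s * e s)"
    by (simp add: algebra_simps power2_eq_square)
  have cross: "(\<Sum>r<N. \<Sum>s<N. th r * Q r s * e s) = (\<Sum>r<N. \<Sum>s<N. e r * Q r s * th s)"
  proof -
    have "(\<Sum>r<N. \<Sum>s<N. th r * Q r s * e s) = (\<Sum>s<N. \<Sum>r<N. th r * Q r s * e s)"
      by (rule sum.swap)
    also have "\<dots> = (\<Sum>s<N. \<Sum>r<N. e s * Q s r * th r)"
      unfolding Q_def by (simp add: Qbar_sym mult.commute mult.left_commute)
    finally show ?thesis .
  qed
  have gradsum: "(\<Sum>r<N. grad P th r * e r) = (\<Sum>r<N. \<Sum>s<N. e r * Q r s * th s) + (\<Sum>r<N. lvec P r * e r)"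
    unfolding grad_def N_def Q_def
    by (simp add: sum_distrib_left sum_distrib_right sum.distrib algebra_simps)
  have lin: "(\<Sum>r<N. lvec P r * (th r + t * e r)) = (\<Sum>r<N. lvec P r * th r) + t * (\<Sum>r<N. lvec P r * e r)"
    by (simp add: algebra_simps sum.distrib sum_distrib_left)
  have quad: "(\<Sum>r<N. \<Sum>s<N. (th r + t*e r) * Q r s * (th s + t * e s)) =
     (\<Sum>r<N. \<Sum>s<N. th r * Q r s * th s) + 2 * t * (\<Sum>r<N. \<Sum>s<N. e r * Q r s * th s)
      + t^2 * (\<Sum>r<N. \<Sum>s<N. e r * Q r s * e s)"
  proof -
    have "(\<Sum>r<N. \<Sum>s<N. (th r + t*e r) * Q r s * (th s + t * e s)) =
      (\<Sum>r<N. \<Sum>s<N. th r * Q r s * th s) + t * (\<Sum>r<N. \<Sum>s<N. e r * Q r s * th s)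
      + t * (\<Sum>r<N. \<Sum>s<N. th r * Q r s * e s) + t^2 * (\<Sum>r<N. \<Sum>s<N. e r * Q r s * e s)"
      unfolding h1 by (simp only: sum.distrib sum_distrib_left)
    then show ?thesis using cross by simp
  qed
  show ?thesis
    unfolding fobj_def N_def[symmetric] Q_def[symmetric] quad lin gradsum
    by (simp add: algebra_simps)
qed

lemma sum_delta_R:
  assumes "(a::nat) < N" shows "(\<Sum>r<N. f r * (if r = a then c else 0)) = f a * (c::real)"
proof -
  have "(\<Sum>r<N. f r * (if r = a then c else 0)) = (\<Sum>r<N. if r = a then f r * c else 0)"
    by (rule sum.cong) auto
  then show ?thesis using assms by simp
qed

lemma sum_delta_L:
  assumes "(a::nat) < N" shows "(\<Sum>r<N. (if r = a then c else 0) * f r) = c * (f a::real)"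
proof -
  have "(\<Sum>r<N. (if r = a then c else 0) * f r) = (\<Sum>r<N. if r = a then c * f r else 0)"
    by (rule sum.cong) auto
  then show ?thesis using assms by simp
qed

lemma fobj_pair:
  assumes "a < dimN P" "b < dimN P" "a \<noteq> b"
  shows "fobj P (th(a := th a + t, b := th b - t)) = fobj P th + t*(grad P th a - grad P th b)
     + t^2/2 * (Qbar P a a + Qbar P b b - 2*Qbar P a b)"
proof -
  define e where "e = (\<lambda>r. (if r = a then 1 else 0) - (if r = b then (1::real) else 0))"
  have eq: "th(a := th a + t, b := th b - t) = (\<lambda>r. th r + t * e r)"
    using assms(3) by (auto simp: e_def)
  have s1: "(\<Sum>r<dimN P. grad P th r * e r) = grad P th a - grad P th b"
    using assms by (simp add: e_def right_diff_distrib sum_subtractf sum_delta_R)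
  have s2: "\<And>r. (\<Sum>s<dimN P. e r * Qbar P r s * e s) = e r * (Qbar P r a - Qbar P r b)"
  proof -
    fix r
    have "(\<Sum>s<dimN P. e r * Qbar P r s * e s) = e r * (\<Sum>s<dimN P. Qbar P r s * e s)"
      by (simp add: sum_distrib_left mult.assoc)
    also have "(\<Sum>s<dimN P. Qbar P r s * e s) = Qbar P r a - Qbar P r b"
      using assms by (simp add: e_def right_diff_distrib sum_subtractf sum_delta_R)
    finally show "(\<Sum>s<dimN P. e r * Qbar P r s * e s) = e r * (Qbar P r a - Qbar P r b)" .
  qed
  have s3: "(\<Sum>r<dimN P. e r * (Qbar P r a - Qbar P r b)) = Qbar P a a + Qbar P b b - 2*Qbar P a b"
    using assms by (simp add: e_def left_diff_distrib sum_subtractf sum_delta_L Qbar_sym[of P b a])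
  show ?thesis unfolding eq fobj_update s1 s2 s3 by simp
qed

lemma fobj_single:
  assumes "a < dimN P"
  shows "fobj P (th(a := x)) = fobj P th + (x - th a) * grad P th a
     + (x - th a)^2/2 * Qbar P a a"
proof -
  define e where "e = (\<lambda>r. if r = a then (1::real) else 0)"
  have eq: "th(a := x) = (\<lambda>r. th r + (x - th a) * e r)"
    by (auto simp: e_def)
  have s1: "(\<Sum>r<dimN P. grad P th r * e r) = grad P th a"
    using assms by (simp add: e_def sum_delta_R)
  have s2: "(\<Sum>r<dimN P. \<Sum>s<dimN P. e r * Qbar P r s * e s) = Qbar P a a"
    using assms by (simp add: e_def sum_delta_R sum_delta_L)
  show ?thesis unfolding eq fobj_update s1 s2 by simp
qed

lemma Qbar_a: "i < nn P \<Longrightarrow> j < nn P \<Longrightarrow> Qbar P i j = Qm P i j"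
  unfolding Qbar_def Qm_def Mrow_def by simp

lemma Qbar_as: "i < nn P \<Longrightarrow> j < nn P \<Longrightarrow> Qbar P (nn P + i) (nn P + j) = Qm P i j"
  unfolding Qbar_def Qm_def Mrow_def by simp

lemma Qbar_g: "u < kk1 P \<Longrightarrow> Qbar P (2 * nn P + u) (2 * nn P + u) = AAt P u u"
  unfolding Qbar_def AAt_def Mrow_def by simp

lemma Qbar_m: "u < kk2 P \<Longrightarrow> Qbar P (2 * nn P + kk1 P + u) (2 * nn P + kk1 P + u) = GGt P u u"
  unfolding Qbar_def GGt_def Mrow_def by simp

lemma sumsq_pos: "\<exists>t<(p::nat). f t \<noteq> (0::real) \<Longrightarrow> 0 < (\<Sum>t<p. f t * f t)"
proof -
  assume "\<exists>t<p. f t \<noteq> 0"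
  then obtain t where "t < p" "f t \<noteq> 0" by blast
  then show ?thesis by (intro sum_pos2[of _ t]) (auto simp: zero_less_mult_iff linorder_neq_iff)
qed

lemma Qdiff: "Qm P i i + Qm P j j - 2 * Qm P i j = (\<Sum>t<pp P. (Xm P i t - Xm P j t) * (Xm P i t - Xm P j t))"
  unfolding Qm_def by (simp add: algebra_simps sum.distrib sum_subtractf sum_distrib_left)

lemma Qdiff_nonneg: "0 \<le> Qm P i i + Qm P j j - 2 * Qm P i j"
  unfolding Qdiff by (intro sum_nonneg) simp

lemma Qdiff_nonneg': "2 * Qm P i j \<le> Qm P i i + Qm P j j"
  using Qdiff_nonneg[of P i j] by simp

lemma AAt_nonneg: "0 \<le> AAt P u u" unfolding AAt_def by (intro sum_nonneg) simp
lemma GGt_nonneg: "0 \<le> GGt P u u" unfolding GGt_def by (intro sum_nonneg) simp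

definition Bnd :: "svr_data \<Rightarrow> real" where
  "Bnd P = 1 + (\<Sum>i<nn P. \<Sum>j<nn P. Qm P i i + Qm P j j - 2 * Qm P i j)
     + (\<Sum>u<kk1 P. AAt P u u) + (\<Sum>u<kk2 P. GGt P u u)"

lemma Bnd_Q: assumes "i < nn P" "j < nn P" shows "Qm P i i + Qm P j j - 2 * Qm P i j \<le> Bnd P"
proof -
  have "Qm P i i + Qm P j j - 2 * Qm P i j \<le> (\<Sum>j<nn P. Qm P i i + Qm P j j - 2 * Qm P i j)"
    using assms by (intro member_le_sum) (auto simp: Qdiff_nonneg')
  also have "\<dots> \<le> (\<Sum>i<nn P. \<Sum>j<nn P. Qm P i i + Qm P j j - 2 * Qm P i j)"
    using assms by (intro member_le_sum[where f="\<lambda>i. \<Sum>j<nn P. Qm P i i + Qm P j j - 2 * Qm P i j"])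
       (auto intro!: sum_nonneg simp: Qdiff_nonneg')
  finally show ?thesis unfolding Bnd_def
    using sum_nonneg[of "{..<kk1 P}" "\<lambda>u. AAt P u u"] sum_nonneg[of "{..<kk2 P}" "\<lambda>u. GGt P u u"]
    by (simp add: AAt_nonneg GGt_nonneg)
qed

lemma Bnd_parts_nonneg: "0 \<le> (\<Sum>i<nn P. \<Sum>j<nn P. Qm P i i + Qm P j j - 2 * Qm P i j)"
  by (intro sum_nonneg) (simp add: Qdiff_nonneg')

lemma Bnd_A: assumes "u < kk1 P" shows "AAt P u u \<le> Bnd P"
proof -
  have "AAt P u u \<le> (\<Sum>u<kk1 P. AAt P u u)"
    using assms by (intro member_le_sum) (auto simp: AAt_nonneg)
  then show ?thesis unfolding Bnd_def using Bnd_parts_nonneg[of P]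
    sum_nonneg[of "{..<kk2 P}" "\<lambda>u. GGt P u u"] by (simp add: GGt_nonneg)
qed

lemma Bnd_G: assumes "u < kk2 P" shows "GGt P u u \<le> Bnd P"
proof -
  have "GGt P u u \<le> (\<Sum>u<kk2 P. GGt P u u)"
    using assms by (intro member_le_sum) (auto simp: GGt_nonneg)
  then show ?thesis unfolding Bnd_def using Bnd_parts_nonneg[of P]
    sum_nonneg[of "{..<kk1 P}" "\<lambda>u. AAt P u u"] by (simp add: AAt_nonneg)
qed

lemma Bnd_pos: "0 < Bnd P"
  unfolding Bnd_def using Bnd_parts_nonneg[of P]
    sum_nonneg[of "{..<kk1 P}" "\<lambda>u. AAt P u u"] sum_nonneg[of "{..<kk2 P}" "\<lambda>u. GGt P u u"]
  by (simp add: AAt_nonneg GGt_nonneg)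

lemma pair_scalar:
  fixes q G I1 I2 tq ts :: real
  assumes "0 < q" "I1 \<le> 0" "0 \<le> I2" "tq = - G / q" "ts = min (max I1 tq) I2"
  shows "ts * G + ts^2/2 * q \<le> 0" "ts = tq \<Longrightarrow> ts * G + ts^2/2 * q = - (G^2 / (2 * q))"
    "I1 \<le> ts" "ts \<le> I2"
proof -
  have G: "G = - tq * q" using assms(1,4) by simp
  have e: "ts * G + ts^2/2 * q = q/2 * (ts * (ts - 2 * tq))"
    unfolding G by (simp add: algebra_simps power2_eq_square)
  have "ts * (ts - 2 * tq) \<le> 0"
  proof (cases "0 \<le> tq")
    case True
    then have "ts = min tq I2" using assms by simp
    then have "0 \<le> ts" "ts \<le> tq" using True assms by auto
    then show ?thesis by (simp add: mult_nonneg_nonpos)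
  next
    case False
    then have "ts = max I1 tq" using assms by simp
    then have "ts \<le> 0" "tq \<le> ts" using False assms by auto
    then show ?thesis by (simp add: mult_nonpos_nonneg)
  qed
  then show "ts * G + ts^2/2 * q \<le> 0" unfolding e using assms(1)
    by (simp add: mult_nonneg_nonpos)
  show "ts = tq \<Longrightarrow> ts * G + ts^2/2 * q = - (G^2 / (2 * q))"
    using assms(1) unfolding G by (simp add: field_simps power2_eq_square)
  show "I1 \<le> ts" "ts \<le> I2" using assms by auto
qed

lemma feasible_box:
  assumes "feasible P th" "p < 2 * nn P"
  shows "0 \<le> th p \<and> th p \<le> Cc P / real (nn P)"
proof (cases "p < nn P")
  case True then show ?thesis using assms unfolding feasible_def alphaB_def by auto
next
  case False
  then obtain k where k: "p = nn P + k" "k < nn P" using assms(2)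
    by (metis add_diff_inverse_nat add_less_imp_less_left mult_2)
  then show ?thesis using assms unfolding feasible_def alphasB_def by auto
qed

lemma feasibleI2:
  assumes "\<And>p. p < 2 * nn P \<Longrightarrow> 0 \<le> th p \<and> th p \<le> Cc P / real (nn P)"
    "(\<Sum>i<nn P. th i + th (nn P + i)) \<le> Cc P * nuu P"
    "(\<Sum>i<nn P. th i - th (nn P + i)) = 0"
    "\<And>j. j < kk1 P \<Longrightarrow> 0 \<le> th (2 * nn P + j)"
  shows "feasible P th"
  unfolding feasible_def alphaB_def alphasB_def gammaB_def
  using assms(1)[of "nn P + _"] assms(1)[of "_"] assms(2-4) by auto

lemma pair_case:
  fixes off :: nat
  assumes V: "valid_data P" and F: "feasible P th"
    and off: "off = 0 \<or> off = nn P"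
    and aeq: "a = (\<lambda>i. th (off + i))" and geq: "g = (\<lambda>i. grad P th (off + i))"
    and Dp: "delta_pair P a g = Delta P th" and Dpos: "0 < Delta P th"
    and ch: "pair_choice P a g i j"
    and tsd: "ts = pair_tstar P a g i j"
    and th': "th' = th(off + i := th (off + i) + ts, off + j := th (off + j) - ts)"
    and cd: "c = (ts \<noteq> pair_tq P g i j)"
  shows "feasible P th' \<and> fobj P th' \<le> fobj P th \<and>
     (\<not> c \<longrightarrow> (Delta P th)^2 / (2 * Bnd P) \<le> fobj P th - fobj P th')"
proof -
  define n where "n = nn P"
  define Cn where "Cn = Cc P / real (nn P)"
  define D where "D = Delta P th"
  have i: "i < n" "a i < Cn" "g i = Min (g ` Iup P a)" and j: "j < n" "0 < a j" "g j = Max (g ` Ilow P a)"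
    using ch unfolding pair_choice_def Iup_def Ilow_def n_def Cn_def by auto
  have ne: "Iup P a \<noteq> {}" "Ilow P a \<noteq> {}"
    using ch unfolding pair_choice_def by auto
  have "D = max (g j - g i) 0" using Dp ne i j unfolding delta_pair_def D_def by simp
  then have gji: "g j - g i = D" using Dpos D_def by linarith
  then have ij: "i \<noteq> j" using Dpos D_def by auto
  have offn: "off + i < 2 * n" "off + j < 2 * n" using off i j n_def by auto
  have ai: "0 \<le> a i" "a i \<le> Cn" "0 \<le> a j" "a j \<le> Cn"
    using feasible_box[OF F, of "off + i"] feasible_box[OF F, of "off + j"] offn
    unfolding aeq Cn_def n_def by auto
  define q where "q = Qm P i i + Qm P j j - 2 * Qm P i j"
  have qpos: "0 < q"
  proof -
    have "\<exists>t<pp P. Xm P i t - Xm P j t \<noteq> 0"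
      using V ij i(1) j(1) unfolding valid_data_def n_def by fastforce
    then show ?thesis unfolding q_def Qdiff by (rule sumsq_pos)
  qed
  have qB: "q \<le> Bnd P" unfolding q_def using Bnd_Q i j n_def by auto
  have Qb: "Qbar P (off+i) (off+i) + Qbar P (off+j) (off+j) - 2 * Qbar P (off+i) (off+j) = q"
    using off i(1) j(1) unfolding q_def n_def by (auto simp: Qbar_a Qbar_as)
  have dimN: "off + i < dimN P" "off + j < dimN P" using offn unfolding dimN_def n_def by auto
  have fo: "fobj P th' = fobj P th + ts * (g i - g j) + ts^2/2 * q"
    unfolding th' using fobj_pair[OF dimN] ij Qb geq by simp
  define I1 where "I1 = max (- a i) (a j - Cn)"
  define I2 where "I2 = min (a j) (Cn - a i)"
  define tq where "tq = pair_tq P g i j"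
  have tqd: "tq = - (g i - g j) / q" unfolding tq_def pair_tq_def q_def by simp
  have tsd': "ts = min (max I1 tq) I2"
    unfolding tsd pair_tstar_def I1_def I2_def tq_def Cn_def Let_def by simp
  have I1: "I1 \<le> 0" and I2: "0 \<le> I2" using ai unfolding I1_def I2_def by auto
  note sc = pair_scalar[OF qpos I1 I2 tqd tsd']
  have dec: "fobj P th' \<le> fobj P th" using sc(1) fo by simp
  have unc: "\<not> c \<longrightarrow> D^2 / (2 * Bnd P) \<le> fobj P th - fobj P th'"
  proof
    assume "\<not> c"
    then have "ts = tq" using cd tq_def by simp
    then have "fobj P th - fobj P th' = (g i - g j)^2 / (2 * q)" using sc(2) fo by simp
    also have "(g i - g j)^2 = D^2" proof -
      have "g i - g j = - D" using gji by simp
      then show ?thesis by simp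
    qed
    finally have e: "fobj P th - fobj P th' = D^2 / (2 * q)" .
    have "D^2 / (2 * Bnd P) \<le> D^2 / (2 * q)"
      using qpos qB by (intro divide_left_mono) auto
    then show "D^2 / (2 * Bnd P) \<le> fobj P th - fobj P th'" using e by simp
  qed
  define e where "e = (\<lambda>r. (if r = off + i then 1 else 0) - (if r = off + j then (1::real) else 0))"
  have th'e: "th' = (\<lambda>r. th r + ts * e r)"
    unfolding th' e_def using ij by (auto simp: fun_eq_iff)
  have E1: "(\<Sum>k<n. e k) = 0"
    using off i(1) j(1) unfolding e_def n_def by (auto simp: sum_subtractf)
  have E2: "(\<Sum>k<n. e (n + k)) = 0"
  proof (cases "off = 0")
    case True
    then have "\<And>k. e (n + k) = 0" unfolding e_def using i(1) j(1) by auto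
    then show ?thesis by simp
  next
    case False
    then have "off = n" using off n_def by simp
    then show ?thesis unfolding e_def using i(1) j(1) by (simp add: sum_subtractf)
  qed
  have S1: "(\<Sum>k<n. th' k + th' (n + k)) = (\<Sum>k<n. th k + th (n + k))"
  proof -
    have "(\<Sum>k<n. th' k + th' (n + k)) = (\<Sum>k<n. th k + th (n + k)) + ts * ((\<Sum>k<n. e k) + (\<Sum>k<n. e (n + k)))"
      unfolding th'e by (simp add: sum.distrib sum_distrib_left algebra_simps)
    then show ?thesis using E1 E2 by simp
  qed
  have S2: "(\<Sum>k<n. th' k - th' (n + k)) = (\<Sum>k<n. th k - th (n + k))"
  proof -
    have "(\<Sum>k<n. th' k - th' (n + k)) = (\<Sum>k<n. th k - th (n + k)) + ts * ((\<Sum>k<n. e k) - (\<Sum>k<n. e (n + k)))"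
      unfolding th'e by (simp add: sum.distrib sum_subtractf sum_distrib_left algebra_simps)
    then show ?thesis using E1 E2 by simp
  qed
  have box: "0 \<le> th' p \<and> th' p \<le> Cn" if "p < 2 * n" for p
  proof -
    have "I1 \<le> ts" "ts \<le> I2" using sc(3,4) .
    then have r: "0 \<le> a i + ts" "a i + ts \<le> Cn" "0 \<le> a j - ts" "a j - ts \<le> Cn"
      unfolding I1_def I2_def by auto
    show ?thesis
      using r feasible_box[OF F, of p] that unfolding th' aeq Cn_def n_def by auto
  qed
  have gam: "0 \<le> th' (2 * n + k)" if "k < kk1 P" for k
  proof -
    have "th' (2 * n + k) = th (2 * n + k)" unfolding th' using offn by auto
    then show ?thesis using F that unfolding feasible_def gammaB_def n_def by auto
  qed
  have "feasible P th'"
    apply (rule feasibleI2)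
    using box S1 S2 gam F unfolding n_def Cn_def feasible_def alphaB_def alphasB_def by auto
  then show ?thesis using dec unc D_def by blast
qed

lemma feasible_agree:
  assumes "\<And>r. r < 2 * nn P + kk1 P \<Longrightarrow> th' r = th r" "feasible P th"
  shows "feasible P th'"
proof -
  have s1: "(\<Sum>i<nn P. th' i + th' (nn P + i)) = (\<Sum>i<nn P. th i + th (nn P + i))"
    by (rule sum.cong) (auto simp: assms(1))
  have s2: "(\<Sum>i<nn P. th' i - th' (nn P + i)) = (\<Sum>i<nn P. th i - th (nn P + i))"
    by (rule sum.cong) (auto simp: assms(1))
  show ?thesis using assms(2) s1 s2 unfolding feasible_def alphaB_def alphasB_def gammaB_def
    by (auto simp: assms(1))
qed

lemma gamma_case:
  assumes V: "valid_data P" and F: "feasible P th"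
    and Dpos: "0 < Delta P th" and D3: "Delta3 P th = Delta P th"
    and u: "u < kk1 P" and gu: "gG P th u = Min (gG P th ` {..<kk1 P})"
    and vd: "v = gammaB P th u - gG P th u / AAt P u u"
    and th': "th' = th(2 * nn P + u := max v 0)"
    and cd: "c = (v < 0)"
  shows "feasible P th' \<and> fobj P th' \<le> fobj P th \<and>
     (\<not> c \<longrightarrow> (Delta P th)^2 / (2 * Bnd P) \<le> fobj P th - fobj P th')"
proof -
  define D where "D = Delta P th"
  define a where "a = 2 * nn P + u"
  define g where "g = grad P th a"
  define Aq where "Aq = AAt P u u"
  have gdef: "gG P th u = g" unfolding g_def a_def gG_def by simp
  have "D = max (- g) 0" using D3 gu gdef unfolding Delta3_def D_def by simp
  then have gD: "g = - D" using Dpos D_def by linarith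
  have Aq: "0 < Aq" unfolding Aq_def AAt_def using V u unfolding valid_data_def
    by (intro sumsq_pos) auto
  have AqB: "Aq \<le> Bnd P" unfolding Aq_def using Bnd_A u .
  have aN: "a < dimN P" unfolding a_def dimN_def using u by simp
  have tha: "0 \<le> th a" using F u unfolding feasible_def gammaB_def a_def by auto
  have vd': "v = th a - g / Aq" unfolding vd gdef Aq_def gammaB_def a_def by simp
  have fo: "fobj P th' = fobj P th + (max v 0 - th a) * g + (max v 0 - th a)^2/2 * Aq"
    unfolding th' a_def[symmetric] fobj_single[OF aN] g_def Aq_def
    using Qbar_g[OF u] a_def by simp
  have res: "fobj P th' \<le> fobj P th \<and> (\<not> c \<longrightarrow> D^2 / (2 * Bnd P) \<le> fobj P th - fobj P th')"
  proof (cases "v < 0")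
    case True
    then have x: "max v 0 - th a = - th a" by simp
    have "th a * Aq < g" using True vd' Aq by (simp add: field_simps)
    moreover have "0 \<le> th a * Aq" using tha Aq by simp
    ultimately have "th a * (th a * Aq / 2 - g) \<le> 0" using tha
      by (intro mult_nonneg_nonpos) auto
    then have "fobj P th' \<le> fobj P th" unfolding fo x
      by (simp add: power2_eq_square algebra_simps)
    then show ?thesis using True cd by simp
  next
    case False
    then have x: "max v 0 - th a = - g / Aq" using vd' by simp
    have e: "fobj P th - fobj P th' = g^2 / (2 * Aq)"
      unfolding fo x using Aq by (simp add: field_simps power2_eq_square)
    have "D^2 / (2 * Bnd P) \<le> D^2 / (2 * Aq)"
      using Aq AqB by (intro divide_left_mono) auto
    then have "D^2 / (2 * Bnd P) \<le> fobj P th - fobj P th'" using e gD by simp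
    moreover have "0 \<le> g^2 / (2 * Aq)" using Aq by simp
    ultimately show ?thesis using e by simp
  qed
  have box: "0 \<le> th' p \<and> th' p \<le> Cc P / real (nn P)" if "p < 2 * nn P" for p
    using feasible_box[OF F that] that unfolding th' by auto
  have s1: "(\<Sum>i<nn P. th' i + th' (nn P + i)) = (\<Sum>i<nn P. th i + th (nn P + i))"
    by (rule sum.cong) (auto simp: th')
  have s2: "(\<Sum>i<nn P. th' i - th' (nn P + i)) = (\<Sum>i<nn P. th i - th (nn P + i))"
    by (rule sum.cong) (auto simp: th')
  have gam: "0 \<le> th' (2 * nn P + k)" if "k < kk1 P" for k
    using F that unfolding th' feasible_def gammaB_def by auto
  have "feasible P th'"
    apply (rule feasibleI2)
    using box s1 s2 gam F unfolding feasible_def alphaB_def alphasB_def by auto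
  then show ?thesis using res D_def by blast
qed

lemma mu_case:
  assumes V: "valid_data P" and F: "feasible P th"
    and Dpos: "0 < Delta P th" and D4: "Delta4 P th = Delta P th"
    and u: "u < kk2 P" and gu: "\<bar>gM P th u\<bar> = Max ((\<lambda>s. \<bar>gM P th s\<bar>) ` {..<kk2 P})"
    and th': "th' = th(2 * nn P + kk1 P + u := muB P th u - gM P th u / GGt P u u)"
  shows "feasible P th' \<and> fobj P th' \<le> fobj P th \<and>
     (Delta P th)^2 / (2 * Bnd P) \<le> fobj P th - fobj P th'"
proof -
  define D where "D = Delta P th"
  define a where "a = 2 * nn P + kk1 P + u"
  define g where "g = grad P th a"
  define Gq where "Gq = GGt P u u"
  have gdef: "gM P th u = g" unfolding g_def a_def gM_def by simp
  have gD: "\<bar>g\<bar> = D" using D4 gu gdef unfolding Delta4_def D_def by simp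
  have Gq: "0 < Gq" unfolding Gq_def GGt_def using V u unfolding valid_data_def
    by (intro sumsq_pos) auto
  have GqB: "Gq \<le> Bnd P" unfolding Gq_def using Bnd_G u .
  have aN: "a < dimN P" unfolding a_def dimN_def using u by simp
  have fo: "fobj P th' = fobj P th + (- g / Gq) * g + (- g / Gq)^2/2 * Gq"
    unfolding th' a_def[symmetric] fobj_single[OF aN] g_def Gq_def
    using Qbar_m[OF u] a_def gdef by (simp add: muB_def Gq_def g_def)
  have e: "fobj P th - fobj P th' = g^2 / (2 * Gq)"
    unfolding fo using Gq by (simp add: field_simps power2_eq_square)
  have "D^2 / (2 * Bnd P) \<le> D^2 / (2 * Gq)"
    using Gq GqB by (intro divide_left_mono) auto
  moreover have "g^2 = D^2" using gD by (metis power2_abs)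
  moreover have "0 \<le> g^2 / (2 * Gq)" using Gq by simp
  moreover have "feasible P th'" using F by (rule feasible_agree[rotated]) (auto simp: th')
  ultimately show ?thesis using e D_def by simp
qed

lemma step_lemma:
  assumes V: "valid_data P" and F: "feasible P th" and Dpos: "0 < Delta P th"
    and S: "smo_step P th th' c"
  shows "feasible P th' \<and> fobj P th' \<le> fobj P th \<and>
     (\<not> c \<longrightarrow> (Delta P th)^2 / (2 * Bnd P) \<le> fobj P th - fobj P th')"
  using S unfolding smo_step_def Let_def
proof (elim disjE conjE exE)
  fix i j
  assume D1: "Delta1 P th = Delta P th" and ch: "pair_choice P (alphaB P th) (gA P th) i j"
    and t: "th' = th(i := th i + pair_tstar P (alphaB P th) (gA P th) i j,
                 j := th j - pair_tstar P (alphaB P th) (gA P th) i j)"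
    and c: "c = (pair_tstar P (alphaB P th) (gA P th) i j \<noteq> pair_tq P (gA P th) i j)"
  show ?thesis
    apply (rule pair_case[OF V F, of 0 "alphaB P th" "gA P th" i j])
    using D1 ch t c Dpos by (auto simp: fun_eq_iff alphaB_def gA_def Delta1_def)
next
  fix i j
  assume D2: "Delta2 P th = Delta P th" and ch: "pair_choice P (alphasB P th) (gAs P th) i j"
    and t: "th' = th(nn P + i := th (nn P + i) + pair_tstar P (alphasB P th) (gAs P th) i j,
                 nn P + j := th (nn P + j) - pair_tstar P (alphasB P th) (gAs P th) i j)"
    and c: "c = (pair_tstar P (alphasB P th) (gAs P th) i j \<noteq> pair_tq P (gAs P th) i j)"
  show ?thesis
    apply (rule pair_case[OF V F, of "nn P" "alphasB P th" "gAs P th" i j])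
    using D2 ch t c Dpos by (auto simp: fun_eq_iff alphasB_def gAs_def Delta2_def)
next
  fix u
  assume "Delta3 P th = Delta P th" "u < kk1 P" "gG P th u = Min (gG P th ` {..<kk1 P})"
    "th' = th(2 * nn P + u := max (gammaB P th u - gG P th u / AAt P u u) 0)"
    "c = (gammaB P th u - gG P th u / AAt P u u < 0)"
  then show ?thesis using gamma_case[OF V F Dpos] by blast
next
  fix u
  assume "Delta4 P th = Delta P th" "u < kk2 P"
    "\<bar>gM P th u\<bar> = Max ((\<lambda>s. \<bar>gM P th s\<bar>) ` {..<kk2 P})"
    "th' = th(2 * nn P + kk1 P + u := muB P th u - gM P th u / GGt P u u)"
    "c = False"
  then show ?thesis using mu_case[OF V F Dpos] by blast
qed

lemma quad_as_sumsq:
  "(\<Sum>r<dimN P. \<Sum>s<dimN P. th r * Qbar P r s * th s)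
     = (\<Sum>t<pp P. (\<Sum>r<dimN P. Mrow P r t * th r) * (\<Sum>r<dimN P. Mrow P r t * th r))"
proof -
  define N where "N = dimN P"
  define M where "M = Mrow P"
  have "(\<Sum>t<pp P. (\<Sum>r<N. M r t * th r) * (\<Sum>s<N. M s t * th s))
      = (\<Sum>t<pp P. \<Sum>r<N. \<Sum>s<N. (M r t * th r) * (M s t * th s))"
    by (simp add: sum_product)
  also have "\<dots> = (\<Sum>r<N. \<Sum>t<pp P. \<Sum>s<N. (M r t * th r) * (M s t * th s))"
    by (rule sum.swap)
  also have "\<dots> = (\<Sum>r<N. \<Sum>s<N. \<Sum>t<pp P. (M r t * th r) * (M s t * th s))"
    by (rule sum.cong[OF refl], rule sum.swap)
  also have "\<dots> = (\<Sum>r<N. \<Sum>s<N. th r * Qbar P r s * th s)"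
    unfolding Qbar_def M_def by (simp add: sum_distrib_left sum_distrib_right algebra_simps)
  finally show ?thesis unfolding N_def M_def by simp
qed

lemma lin_swap:
  "(\<Sum>r<dimN P. (\<Sum>t<pp P. Mrow P r t * \<beta> t) * th r)
     = (\<Sum>t<pp P. \<beta> t * (\<Sum>r<dimN P. Mrow P r t * th r))"
proof -
  have "(\<Sum>r<dimN P. (\<Sum>t<pp P. Mrow P r t * \<beta> t) * th r)
      = (\<Sum>r<dimN P. \<Sum>t<pp P. \<beta> t * (Mrow P r t * th r))"
    by (rule sum.cong[OF refl]) (simp add: sum_distrib_right sum_distrib_left mult.commute mult.left_commute)
  also have "\<dots> = (\<Sum>t<pp P. \<Sum>r<dimN P. \<beta> t * (Mrow P r t * th r))"
    by (rule sum.swap)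
  finally show ?thesis by (simp add: sum_distrib_left)
qed

lemma fobj_lower:
  assumes V: "valid_data P" and PF: "primal_feasible P"
  shows "\<exists>L. \<forall>th. feasible P th \<longrightarrow> L \<le> fobj P th"
proof -
  obtain \<beta> where bA: "\<And>j. j < kk1 P \<Longrightarrow> (\<Sum>t<pp P. Am P j t * \<beta> t) \<le> bv P j"
    and bG: "\<And>j. j < kk2 P \<Longrightarrow> (\<Sum>t<pp P. Gm P j t * \<beta> t) = dv P j"
    using PF unfolding primal_feasible_def by blast
  define n where "n = nn P"
  define Cn where "Cn = Cc P / real (nn P)"
  define m where "m r = (\<Sum>t<pp P. Mrow P r t * \<beta> t)" for r
  define h where "h r = (if r < 2 * n then \<bar>lvec P r - m r\<bar> * Cn else 0)" for r
  define L where "L = - (\<Sum>t<pp P. \<beta> t * \<beta> t / 2) - (\<Sum>r<dimN P. h r)"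
  have "L \<le> fobj P th" if F: "feasible P th" for th
  proof -
    define w where "w t = (\<Sum>r<dimN P. Mrow P r t * th r)" for t
    have pt: "m r * th r - h r \<le> lvec P r * th r" if r: "r < dimN P" for r
    proof -
      consider (a) "r < 2 * n" | (g) "2 * n \<le> r" "r < 2 * n + kk1 P" | (mu) "2 * n + kk1 P \<le> r"
        by linarith
      then show ?thesis
      proof cases
        case a
        have b: "0 \<le> th r" "th r \<le> Cn" using feasible_box[OF F, of r] a unfolding n_def Cn_def by auto
        have "\<bar>(lvec P r - m r) * th r\<bar> \<le> \<bar>lvec P r - m r\<bar> * Cn"
          using b by (simp add: abs_mult mult_left_mono)
        then show ?thesis using a unfolding h_def by (simp add: algebra_simps abs_le_iff)
      next
        case g
        define j where "j = r - 2 * n"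
        have j: "j < kk1 P" "r = 2 * n + j" using g unfolding j_def by auto
        have "m r = (\<Sum>t<pp P. Am P j t * \<beta> t)" unfolding m_def Mrow_def using j n_def by simp
        then have "m r \<le> lvec P r" using bA[OF j(1)] j unfolding lvec_def n_def by simp
        moreover have "0 \<le> th r" using F j unfolding feasible_def gammaB_def n_def by auto
        ultimately show ?thesis using g unfolding h_def by (simp add: mult_right_mono)
      next
        case mu
        define j where "j = r - 2 * n - kk1 P"
        have j: "j < kk2 P" "r = 2 * n + kk1 P + j" using mu r unfolding j_def dimN_def n_def by auto
        have "m r = - (\<Sum>t<pp P. Gm P j t * \<beta> t)" unfolding m_def Mrow_def using j n_def
          by (simp add: sum_negf)
        then have "m r = lvec P r" using bG[OF j(1)] j unfolding lvec_def n_def by simp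
        then show ?thesis using mu unfolding h_def by simp
      qed
    qed
    have lin: "(\<Sum>t<pp P. \<beta> t * w t) - (\<Sum>r<dimN P. h r) \<le> (\<Sum>r<dimN P. lvec P r * th r)"
    proof -
      have "(\<Sum>r<dimN P. m r * th r - h r) \<le> (\<Sum>r<dimN P. lvec P r * th r)"
        by (rule sum_mono) (simp add: pt)
      moreover have "(\<Sum>r<dimN P. m r * th r) = (\<Sum>t<pp P. \<beta> t * w t)"
        unfolding m_def w_def by (rule lin_swap)
      ultimately show ?thesis by (simp add: sum_subtractf)
    qed
    have q: "(1/2) * (\<Sum>r<dimN P. \<Sum>s<dimN P. th r * Qbar P r s * th s) = (\<Sum>t<pp P. w t * w t / 2)"
      unfolding quad_as_sumsq w_def by (simp add: sum_divide_distrib)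
    have "- (\<Sum>t<pp P. \<beta> t * \<beta> t / 2) \<le> (\<Sum>t<pp P. w t * w t / 2 + \<beta> t * w t)"
    proof -
      have "(\<Sum>t<pp P. - (\<beta> t * \<beta> t / 2)) \<le> (\<Sum>t<pp P. w t * w t / 2 + \<beta> t * w t)"
      proof (rule sum_mono)
        fix t
        have "0 \<le> (w t + \<beta> t) * (w t + \<beta> t)" by simp
        then show "- (\<beta> t * \<beta> t / 2) \<le> w t * w t / 2 + \<beta> t * w t"
          by (simp add: algebra_simps)
      qed
      then show ?thesis by (simp add: sum_negf)
    qed
    then show ?thesis unfolding L_def fobj_def q using lin by (simp add: sum.distrib)
  qed
  then show ?thesis by blast
qed

lemma delta_pair_nonneg: "0 \<le> delta_pair P a g"
  unfolding delta_pair_def by simp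

lemma comps:
  assumes V: "valid_data P"
  shows "\<bar>Delta1 P th\<bar> \<le> Delta P th" "\<bar>Delta2 P th\<bar> \<le> Delta P th"
        "\<bar>Delta3 P th\<bar> \<le> Delta P th" "\<bar>Delta4 P th\<bar> \<le> Delta P th"
proof -
  have "0 < kk2 P" using V unfolding valid_data_def by simp
  then have "\<bar>gM P th 0\<bar> \<le> Delta4 P th" unfolding Delta4_def
    by (intro Max_ge) auto
  then have d4: "0 \<le> Delta4 P th" by linarith
  have d1: "0 \<le> Delta1 P th" "0 \<le> Delta2 P th" "0 \<le> Delta3 P th"
    unfolding Delta1_def Delta2_def Delta3_def by (auto simp: delta_pair_nonneg)
  show "\<bar>Delta1 P th\<bar> \<le> Delta P th" "\<bar>Delta2 P th\<bar> \<le> Delta P th"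
        "\<bar>Delta3 P th\<bar> \<le> Delta P th" "\<bar>Delta4 P th\<bar> \<le> Delta P th"
    using d1 d4 unfolding Delta_def by auto
qed

theorem lemmaD4:
  fixes P :: svr_data
    and th :: "nat \<Rightarrow> nat \<Rightarrow> real"
    and clip :: "nat \<Rightarrow> bool"
    and K :: "nat set"
  assumes "valid_data P"
    and "primal_feasible P"
    and "feasible P (th 0)"
    and "\<And>k. 0 < Delta P (th k)"
    and "\<And>k. smo_step P (th k) (th (Suc k)) (clip k)"
    and "infinite K"
    and "\<And>k. k \<in> K \<Longrightarrow> \<not> clip k"
  shows "(\<forall>\<epsilon>>0. \<exists>N. \<forall>k\<in>K. N \<le> k \<longrightarrow> \<bar>Delta P (th k)\<bar> < \<epsilon>)
       \<and> (\<forall>\<epsilon>>0. \<exists>N. \<forall>k\<in>K. N \<le> k \<longrightarrow> \<bar>Delta1 P (th k)\<bar> < \<epsilon>)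
       \<and> (\<forall>\<epsilon>>0. \<exists>N. \<forall>k\<in>K. N \<le> k \<longrightarrow> \<bar>Delta2 P (th k)\<bar> < \<epsilon>)
       \<and> (\<forall>\<epsilon>>0. \<exists>N. \<forall>k\<in>K. N \<le> k \<longrightarrow> \<bar>Delta3 P (th k)\<bar> < \<epsilon>)
       \<and> (\<forall>\<epsilon>>0. \<exists>N. \<forall>k\<in>K. N \<le> k \<longrightarrow> \<bar>Delta4 P (th k)\<bar> < \<epsilon>)"
proof -
  note V = assms(1)
  have feas: "feasible P (th k)" for k
  proof (induction k)
    case 0 then show ?case using assms(3) by simp
  next
    case (Suc k) then show ?case using step_lemma[OF V Suc assms(4) assms(5)] by blast
  qed
  note st = step_lemma[OF V feas assms(4) assms(5)]
  define d where "d k = fobj P (th k) - fobj P (th (Suc k))" for k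
  have d0: "0 \<le> d k" for k using st[of k] unfolding d_def by simp
  obtain L where L: "\<And>t. feasible P t \<Longrightarrow> L \<le> fobj P t"
    using fobj_lower[OF V assms(2)] by blast
  have "summable d"
  proof (rule summableI_nonneg_bounded[where x="fobj P (th 0) - L"])
    show "0 \<le> d k" for k by (rule d0)
    fix n
    have "sum d {..<n} = fobj P (th 0) - fobj P (th n)"
      unfolding d_def by (rule sum_lessThan_telescope')
    then show "sum d {..<n} \<le> fobj P (th 0) - L" using L[OF feas[of n]] by simp
  qed
  then have dlim: "d \<longlonglongrightarrow> 0" by (rule summable_LIMSEQ_zero)
  define B where "B = Bnd P"
  have Bp: "0 < B" unfolding B_def by (rule Bnd_pos)
  have dK: "k \<in> K \<Longrightarrow> (Delta P (th k))^2 / (2 * B) \<le> d k" for k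
    using st[of k] assms(7)[of k] unfolding d_def B_def by simp
  have main: "\<forall>\<epsilon>>0. \<exists>N. \<forall>k\<in>K. N \<le> k \<longrightarrow> Delta P (th k) < \<epsilon>"
  proof (intro allI impI)
    fix \<epsilon> :: real assume e: "0 < \<epsilon>"
    have "0 < \<epsilon>^2 / (2 * B)" using e Bp by simp
    then obtain N where N: "\<And>k. N \<le> k \<Longrightarrow> norm (d k - 0) < \<epsilon>^2 / (2 * B)"
      using LIMSEQ_D[OF dlim \<open>0 < \<epsilon>^2 / (2 * B)\<close>] by blast
    have "Delta P (th k) < \<epsilon>" if "k \<in> K" "N \<le> k" for k
    proof -
      have n: "norm (d k - 0) < \<epsilon>^2 / (2 * B)" by (rule N[OF that(2)])
      have n2: "d k < \<epsilon>^2 / (2 * B)" using n by simp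
      have lt: "(Delta P (th k))^2 / (2 * B) < \<epsilon>^2 / (2 * B)"
        using dK[OF that(1)] n2 by (rule le_less_trans)
      have "(Delta P (th k))^2 < \<epsilon>^2"
        using lt Bp by (simp add: divide_less_cancel)
      moreover have "0 \<le> \<epsilon>" using e by simp
      ultimately show ?thesis by (rule power_less_imp_less_base)
    qed
    then show "\<exists>N. \<forall>k\<in>K. N \<le> k \<longrightarrow> Delta P (th k) < \<epsilon>" by blast
  qed
  have ab: "\<bar>Delta P (th k)\<bar> = Delta P (th k)" for k using assms(4)[of k] by simp
  note c = comps[OF V]
  have gen: "\<forall>\<epsilon>>0. \<exists>N. \<forall>k\<in>K. N \<le> k \<longrightarrow> \<bar>f k\<bar> < \<epsilon>"
    if h: "\<And>k. \<bar>f k\<bar> \<le> Delta P (th k)" for f :: "nat \<Rightarrow> real"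
  proof (intro allI impI)
    fix \<epsilon> :: real assume "0 < \<epsilon>"
    then obtain N where N: "\<forall>k\<in>K. N \<le> k \<longrightarrow> Delta P (th k) < \<epsilon>" using main by blast
    have "\<bar>f k\<bar> < \<epsilon>" if "k \<in> K" "N \<le> k" for k
      using le_less_trans[OF h[of k]] N that by blast
    then show "\<exists>N. \<forall>k\<in>K. N \<le> k \<longrightarrow> \<bar>f k\<bar> < \<epsilon>" by blast
  qed
  show ?thesis unfolding ab
  proof (intro conjI)
    show "\<forall>\<epsilon>>0. \<exists>N. \<forall>k\<in>K. N \<le> k \<longrightarrow> Delta P (th k) < \<epsilon>" by (rule main)
    show "\<forall>\<epsilon>>0. \<exists>N. \<forall>k\<in>K. N \<le> k \<longrightarrow> \<bar>Delta1 P (th k)\<bar> < \<epsilon>"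
      by (rule gen) (rule c(1))
    show "\<forall>\<epsilon>>0. \<exists>N. \<forall>k\<in>K. N \<le> k \<longrightarrow> \<bar>Delta2 P (th k)\<bar> < \<epsilon>"
      by (rule gen) (rule c(2))
    show "\<forall>\<epsilon>>0. \<exists>N. \<forall>k\<in>K. N \<le> k \<longrightarrow> \<bar>Delta3 P (th k)\<bar> < \<epsilon>"
      by (rule gen) (rule c(3))
    show "\<forall>\<epsilon>>0. \<exists>N. \<forall>k\<in>K. N \<le> k \<longrightarrow> \<bar>Delta4 P (th k)\<bar> < \<epsilon>"
      by (rule gen) (rule c(4))
  qed
qed

end
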